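(* For every $n\ge2$, the group $\mathcal{AM}(\mathrm{Cr}_n)$ is isomorphic to a semidirect product $(S_n\times S_n)\rtimes\mathbb{Z}_2$.
   Context: $S_n$ is the symmetric group. For $n\ge2$, $\mathrm{Cr}_n$ is the poset $\{x_1,\dots,x_n,y_1,\dots,y_n\}$ whose only relations between distinct elements are $x_i<y_i$ ($1\le i\le n$), $x_{i+1}<y_i$ ($1\le i\le n-1$) and $x_1<y_n$. For a finite connected poset $X$ and $x<y$, $e_{xy}$ denotes the incidence-algebra basis element, and $B=\{e_{xy}:x<y\}$. $\mathcal{C}(X)$ is the set of maximal chains. For a bijection $\theta:B\to B$ and $C:u_1<\dots<u_m$ in $\mathcal{C}(X)$, $\theta$ is increasing on $C$ if there is $D:v_1<\dots<v_m$ in $\mathcal{C}(X)$ with $\theta(e_{u_iu_j})=e_{v_iv_j}$ for all $i<j$, decreasing if $\theta(e_{u_iu_j})=e_{v_{m-j+1}v_{m-i+1}}$ for all $i<j$. $\mathcal{M}(X)$: bijections $B\to B$ increasing or decreasing on every maximal chain. A walk is a sequence $u_0,\dots,u_m$ where for each $i$ one of $u_i,u_{i+1}$ covers the other; closed if $u_0=u_m$. For a closed walk $\Gamma:u_0,\dots,u_m=u_0$ and $z\in X$: $s^+_{\theta,\Gamma}(z)=|\{i: u_i<u_{i+1},\ \exists w>z,\ \theta(e_{zw})=e_{u_iu_{i+1}}\}|$, $s^-_{\theta,\Gamma}(z)=|\{i: u_i>u_{i+1},\ \exists w>z,\ \theta(e_{zw})=e_{u_{i+1}u_i}\}|$, $t^+_{\theta,\Gamma}(z)=|\{i: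 u_i<u_{i+1},\ \exists w<z,\ \theta(e_{wz})=e_{u_iu_{i+1}}\}|$, $t^-_{\theta,\Gamma}(z)=|\{i: u_i>u_{i+1},\ \exists w<z,\ \theta(e_{wz})=e_{u_{i+1}u_i}\}|$, $0\le i\le m-1$. $\theta$ is admissible if $s^+-s^-=t^+-t^-$ at every $z$ for every closed walk; $\mathcal{AM}(X)$ is the set of admissible elements of $\mathcal{M}(X)$, a group under composition. *)

theory Defs
  imports "HOL-Algebra.Sym_Groups" "HOL-Algebra.Elementary_Groups"
begin

definition plt :: "('a \<Rightarrow> 'a \<Rightarrow> bool) \<Rightarrow> 'a \<Rightarrow> 'a \<Rightarrow> bool" where
  "plt R x y \<longleftrightarrow> R x y \<and> x \<noteq> y"

text \<open>The basis B = {e_xy : x < y}; e_xy is represented by the pair (x,y).\<close>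
definition basisB :: "'a set \<Rightarrow> ('a \<Rightarrow> 'a \<Rightarrow> bool) \<Rightarrow> ('a \<times> 'a) set" where
  "basisB X R = {(x, y). x \<in> X \<and> y \<in> X \<and> plt R x y}"

definition is_chain :: "'a set \<Rightarrow> ('a \<Rightarrow> 'a \<Rightarrow> bool) \<Rightarrow> 'a set \<Rightarrow> bool" where
  "is_chain X R C \<longleftrightarrow> C \<subseteq> X \<and> (\<forall>a\<in>C. \<forall>b\<in>C. R a b \<or> R b a)"

definition is_max_chain :: "'a set \<Rightarrow> ('a \<Rightarrow> 'a \<Rightarrow> bool) \<Rightarrow> 'a set \<Rightarrow> bool" where
  "is_max_chain X R C \<longleftrightarrow> is_chain X R C \<and> (\<forall>D. is_chain X R D \<and> C \<subseteq> D \<longrightarrow> D = C)"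

text \<open>A maximal chain u_1 < ... < u_m, written as the strictly increasing list of its elements
  (0-indexed).\<close>
definition max_chain_list :: "'a set \<Rightarrow> ('a \<Rightarrow> 'a \<Rightarrow> bool) \<Rightarrow> 'a list \<Rightarrow> bool" where
  "max_chain_list X R us \<longleftrightarrow> sorted_wrt (plt R) us \<and> is_max_chain X R (set us)"

definition increasing_on ::
  "'a set \<Rightarrow> ('a \<Rightarrow> 'a \<Rightarrow> bool) \<Rightarrow> ('a \<times> 'a \<Rightarrow> 'a \<times> 'a) \<Rightarrow> 'a list \<Rightarrow> bool" where
  "increasing_on X R \<theta> us \<longleftrightarrow>
     (\<exists>vs. max_chain_list X R vs \<and> length vs = length us \<and>
        (\<forall>i j. i < j \<and> j < length us \<longrightarrow> \<theta> (us ! i, us ! j) = (vs ! i, vs ! j)))"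

definition decreasing_on ::
  "'a set \<Rightarrow> ('a \<Rightarrow> 'a \<Rightarrow> bool) \<Rightarrow> ('a \<times> 'a \<Rightarrow> 'a \<times> 'a) \<Rightarrow> 'a list \<Rightarrow> bool" where
  "decreasing_on X R \<theta> us \<longleftrightarrow>
     (\<exists>vs. max_chain_list X R vs \<and> length vs = length us \<and>
        (\<forall>i j. i < j \<and> j < length us \<longrightarrow>
           \<theta> (us ! i, us ! j) = (vs ! (length us - 1 - j), vs ! (length us - 1 - i))))"

definition in_M :: "'a set \<Rightarrow> ('a \<Rightarrow> 'a \<Rightarrow> bool) \<Rightarrow> ('a \<times> 'a \<Rightarrow> 'a \<times> 'a) \<Rightarrow> bool" where
  "in_M X R \<theta> \<longleftrightarrow> bij_betw \<theta> (basisB X R) (basisB X R) \<and>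
     (\<forall>us. max_chain_list X R us \<longrightarrow> increasing_on X R \<theta> us \<or> decreasing_on X R \<theta> us)"

definition covers :: "'a set \<Rightarrow> ('a \<Rightarrow> 'a \<Rightarrow> bool) \<Rightarrow> 'a \<Rightarrow> 'a \<Rightarrow> bool" where
  "covers X R a b \<longleftrightarrow> a \<in> X \<and> b \<in> X \<and> plt R b a \<and>
     \<not> (\<exists>c\<in>X. plt R b c \<and> plt R c a)"

definition is_walk :: "'a set \<Rightarrow> ('a \<Rightarrow> 'a \<Rightarrow> bool) \<Rightarrow> 'a list \<Rightarrow> bool" where
  "is_walk X R us \<longleftrightarrow> us \<noteq> [] \<and> set us \<subseteq> X \<and>
     (\<forall>i. i + 1 < length us \<longrightarrow>
        covers X R (us ! i) (us ! (i + 1)) \<or> covers X R (us ! (i + 1)) (us ! i))"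

definition is_closed_walk :: "'a set \<Rightarrow> ('a \<Rightarrow> 'a \<Rightarrow> bool) \<Rightarrow> 'a list \<Rightarrow> bool" where
  "is_closed_walk X R us \<longleftrightarrow> is_walk X R us \<and> hd us = last us"

definition s_plus where
  "s_plus X R \<theta> us z = card {i. i + 1 < length us \<and> plt R (us ! i) (us ! (i + 1)) \<and>
      (\<exists>w\<in>X. plt R z w \<and> \<theta> (z, w) = (us ! i, us ! (i + 1)))}"

definition s_minus where
  "s_minus X R \<theta> us z = card {i. i + 1 < length us \<and> plt R (us ! (i + 1)) (us ! i) \<and>
      (\<exists>w\<in>X. plt R z w \<and> \<theta> (z, w) = (us ! (i + 1), us ! i))}"

definition t_plus where
  "t_plus X R \<theta> us z = card {i. i + 1 < length us \<and> plt R (us ! i) (us ! (i + 1)) \<and>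
      (\<exists>w\<in>X. plt R w z \<and> \<theta> (w, z) = (us ! i, us ! (i + 1)))}"

definition t_minus where
  "t_minus X R \<theta> us z = card {i. i + 1 < length us \<and> plt R (us ! (i + 1)) (us ! i) \<and>
      (\<exists>w\<in>X. plt R w z \<and> \<theta> (w, z) = (us ! (i + 1), us ! i))}"

definition admissible :: "'a set \<Rightarrow> ('a \<Rightarrow> 'a \<Rightarrow> bool) \<Rightarrow> ('a \<times> 'a \<Rightarrow> 'a \<times> 'a) \<Rightarrow> bool" where
  "admissible X R \<theta> \<longleftrightarrow>
     (\<forall>us. is_closed_walk X R us \<longrightarrow> (\<forall>z\<in>X.
        int (s_plus X R \<theta> us z) - int (s_minus X R \<theta> us z)
          = int (t_plus X R \<theta> us z) - int (t_minus X R \<theta> us z)))"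

definition AM_group :: "'a set \<Rightarrow> ('a \<Rightarrow> 'a \<Rightarrow> bool) \<Rightarrow> ('a \<times> 'a \<Rightarrow> 'a \<times> 'a) monoid" where
  "AM_group X R = \<lparr> carrier = {\<theta>. \<theta> \<in> extensional (basisB X R) \<and> in_M X R \<theta> \<and> admissible X R \<theta>},
     mult = (\<lambda>\<theta> \<phi>. restrict (\<theta> \<circ> \<phi>) (basisB X R)),
     one = restrict id (basisB X R) \<rparr>"

text \<open>x_i is represented by (i, False) and y_i by (i, True), 1 \<le> i \<le> n.\<close>
definition crown_carrier :: "nat \<Rightarrow> (nat \<times> bool) set" where
  "crown_carrier n = {(i, b). 1 \<le> i \<and> i \<le> n}"

definition crown_le :: "nat \<Rightarrow> nat \<times> bool \<Rightarrow> nat \<times> bool \<Rightarrow> bool" where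
  "crown_le n p q \<longleftrightarrow> p \<in> crown_carrier n \<and> q \<in> crown_carrier n \<and>
     (p = q \<or> (\<not> snd p \<and> snd q \<and>
        (fst p = fst q \<or> fst p = fst q + 1 \<or> (fst p = 1 \<and> fst q = n))))"

definition aut_action :: "('a, 'c) monoid_scheme \<Rightarrow> ('b, 'd) monoid_scheme \<Rightarrow> ('b \<Rightarrow> 'a \<Rightarrow> 'a) \<Rightarrow> bool" where
  "aut_action N H \<phi> \<longleftrightarrow>
     (\<forall>h\<in>carrier H. \<phi> h \<in> iso N N) \<and>
     (\<forall>h1\<in>carrier H. \<forall>h2\<in>carrier H. \<forall>x\<in>carrier N.
        \<phi> (h1 \<otimes>\<^bsub>H\<^esub> h2) x = \<phi> h1 (\<phi> h2 x))"

definition semidirect_prod ::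
  "('a, 'c) monoid_scheme \<Rightarrow> ('b, 'd) monoid_scheme \<Rightarrow> ('b \<Rightarrow> 'a \<Rightarrow> 'a) \<Rightarrow> ('a \<times> 'b) monoid" where
  "semidirect_prod N H \<phi> = \<lparr> carrier = carrier N \<times> carrier H,
     mult = (\<lambda>(n1, h1) (n2, h2). (n1 \<otimes>\<^bsub>N\<^esub> \<phi> h1 n2, h1 \<otimes>\<^bsub>H\<^esub> h2)),
     one = (\<one>\<^bsub>N\<^esub>, \<one>\<^bsub>H\<^esub>) \<rparr>"

end

theory Submission
  imports Defs
begin


definition pe :: "nat \<Rightarrow> (nat \<times> bool) \<times> (nat \<times> bool)" where
  "pe i = ((i, False), (i, True))"
definition qe :: "nat \<Rightarrow> nat \<Rightarrow> (nat \<times> bool) \<times> (nat \<times> bool)" where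
  "qe n i = ((if i = n then 1 else Suc i, False), (i, True))"
definition isP :: "(nat \<times> bool) \<times> (nat \<times> bool) \<Rightarrow> bool" where
  "isP e \<longleftrightarrow> fst (fst e) = fst (snd e)"
definition ix :: "(nat \<times> bool) \<times> (nat \<times> bool) \<Rightarrow> nat" where
  "ix e = fst (snd e)"

lemma crown_mem[simp]: "(i, b) \<in> crown_carrier n \<longleftrightarrow> 1 \<le> i \<and> i \<le> n"
  by (simp add: crown_carrier_def)

lemma plt_crown: "plt (crown_le n) a b \<longleftrightarrow> a \<in> crown_carrier n \<and> b \<in> crown_carrier n \<and>
   \<not> snd a \<and> snd b \<and> (fst a = fst b \<or> fst a = fst b + 1 \<or> (fst a = 1 \<and> fst b = n))"
  unfolding plt_def crown_le_def by auto

lemma basis_crown: "basisB (crown_carrier n) (crown_le n) = pe ` {1..n} \<union> qe n ` {1..n}"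
proof (intro equalityI subsetI)
  fix e assume "e \<in> basisB (crown_carrier n) (crown_le n)"
  then obtain a b where e: "e = (a, b)" and p: "plt (crown_le n) a b"
    by (auto simp: basisB_def)
  obtain i s j t where ab: "a = (i, s)" "b = (j, t)" by (cases a, cases b)
  from p ab have h: "1 \<le> i" "i \<le> n" "1 \<le> j" "j \<le> n" "\<not> s" "t"
     "i = j \<or> i = j + 1 \<or> (i = 1 \<and> j = n)"
    by (auto simp: plt_crown crown_carrier_def)
  show "e \<in> pe ` {1..n} \<union> qe n ` {1..n}"
  proof (cases "i = j")
    case True then show ?thesis using h e ab by (auto simp: pe_def)
  next
    case False
    then have "e = qe n j" using h e ab by (auto simp: qe_def)
    then show ?thesis using h by auto
  qed
next
  fix e assume "e \<in> pe ` {1..n} \<union> qe n ` {1..n}"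
  then show "e \<in> basisB (crown_carrier n) (crown_le n)"
    by (auto simp: basisB_def plt_crown pe_def qe_def split: if_splits)
qed

context fixes n :: nat assumes n2: "2 \<le> n" begin

lemma isP_pe[simp]: "isP (pe i)" by (simp add: isP_def pe_def)
lemma isP_qe[simp]: "i \<in> {1..n} \<Longrightarrow> \<not> isP (qe n i)" using n2 by (auto simp: isP_def qe_def)
lemma ix_pe[simp]: "ix (pe i) = i" by (simp add: ix_def pe_def)
lemma ix_qe[simp]: "ix (qe n i) = i" by (simp add: ix_def qe_def)
lemma pe_inj[simp]: "pe i = pe j \<longleftrightarrow> i = j" by (simp add: pe_def)
lemma qe_inj[simp]: "qe n i = qe n j \<longleftrightarrow> i = j" by (auto simp: qe_def)
lemma pe_qe[simp]: "i \<in> {1..n} \<Longrightarrow> pe j \<noteq> qe n i" using isP_qe by (metis isP_pe)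
lemma qe_pe[simp]: "i \<in> {1..n} \<Longrightarrow> qe n i \<noteq> pe j" using pe_qe by metis

lemma B_cases:
  assumes "e \<in> basisB (crown_carrier n) (crown_le n)"
  obtains i where "i \<in> {1..n}" "e = pe i" | i where "i \<in> {1..n}" "e = qe n i"
  using assms unfolding basis_crown by auto

lemma B_recon:
  assumes "e \<in> basisB (crown_carrier n) (crown_le n)"
  shows "e = (if isP e then pe (ix e) else qe n (ix e))" "ix e \<in> {1..n}"
  using assms by (cases rule: B_cases, auto)+

lemma pe_B[simp]: "i \<in> {1..n} \<Longrightarrow> pe i \<in> basisB (crown_carrier n) (crown_le n)"
  unfolding basis_crown by auto
lemma qe_B[simp]: "i \<in> {1..n} \<Longrightarrow> qe n i \<in> basisB (crown_carrier n) (crown_le n)"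
  unfolding basis_crown by auto

end

section \<open>Generic counting\<close>

definition NN :: "('a \<times> 'a) set \<Rightarrow> 'a list \<Rightarrow> int" where
  "NN E us = (\<Sum>i<length us - 1. of_bool ((us!i, us!Suc i) \<in> E) - of_bool ((us!Suc i, us!i) \<in> E))"

lemma card_idx: "int (card {i. i + 1 < length us \<and> P i}) = (\<Sum>i<length us - 1. of_bool (P i))"
proof -
  have "{i. i + 1 < length us \<and> P i} = {..<length us - 1} \<inter> {i. P i}" by auto
  then show ?thesis by simp
qed

lemma NN_empty[simp]: "NN {} us = 0" by (simp add: NN_def)

lemma NN_Un: "A \<inter> C = {} \<Longrightarrow> NN (A \<union> C) us = NN A us + NN C us"
  unfolding NN_def sum.distrib[symmetric]
proof (rule sum.cong)
  fix i assume "A \<inter> C = {}"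
  then show "of_bool ((us ! i, us ! Suc i) \<in> A \<union> C) - of_bool ((us ! Suc i, us ! i) \<in> A \<union> C) =
    of_bool ((us ! i, us ! Suc i) \<in> A) - of_bool ((us ! Suc i, us ! i) \<in> A) +
    (of_bool ((us ! i, us ! Suc i) \<in> C) - (of_bool ((us ! Suc i, us ! i) \<in> C)::int))"
    by (cases "(us ! i, us ! Suc i) \<in> A"; cases "(us ! Suc i, us ! i) \<in> A";
        cases "(us ! i, us ! Suc i) \<in> C"; cases "(us ! Suc i, us ! i) \<in> C") auto
qed simp

lemma NN_two: "a \<noteq> b \<Longrightarrow> NN {a, b} us = NN {a} us + NN {b} us"
  using NN_Un[of "{a}" "{b}" us] by (simp add: insert_is_Un[of a "{b}"])

lemma basisB_plt: "e \<in> basisB X R \<Longrightarrow> plt R (fst e) (snd e)"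
  by (auto simp: basisB_def)

lemma s_NN:
  assumes "\<theta> ` basisB X R \<subseteq> basisB X R" "z \<in> X"
  shows "int (s_plus X R \<theta> us z) - int (s_minus X R \<theta> us z) = NN (\<theta> ` {e \<in> basisB X R. fst e = z}) us"
proof -
  have *: "(plt R a b \<and> (\<exists>w\<in>X. plt R z w \<and> \<theta> (z, w) = (a, b))) \<longleftrightarrow> (a, b) \<in> \<theta> ` {e \<in> basisB X R. fst e = z}"
    for a b
  proof
    assume "(a, b) \<in> \<theta> ` {e \<in> basisB X R. fst e = z}"
    then obtain e where e: "e \<in> basisB X R" "fst e = z" "\<theta> e = (a, b)" by auto
    then have "(a, b) \<in> basisB X R" using assms by auto
    then show "plt R a b \<and> (\<exists>w\<in>X. plt R z w \<and> \<theta> (z, w) = (a, b))"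
      using e by (cases e) (auto simp: basisB_def)
  next
    assume "plt R a b \<and> (\<exists>w\<in>X. plt R z w \<and> \<theta> (z, w) = (a, b))"
    then obtain w where "w \<in> X" "plt R z w" "\<theta> (z, w) = (a, b)" by auto
    then show "(a, b) \<in> \<theta> ` {e \<in> basisB X R. fst e = z}"
      using assms(2) by (force simp: basisB_def)
  qed
  have "int (s_plus X R \<theta> us z) = (\<Sum>i<length us - 1. of_bool ((us!i, us!Suc i) \<in> \<theta> ` {e \<in> basisB X R. fst e = z}))"
    unfolding s_plus_def card_idx using * by simp
  moreover have "int (s_minus X R \<theta> us z) = (\<Sum>i<length us - 1. of_bool ((us!Suc i, us!i) \<in> \<theta> ` {e \<in> basisB X R. fst e = z}))"
    unfolding s_minus_def card_idx using * by simp
  ultimately show ?thesis unfolding NN_def sum_subtractf by simp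
qed

lemma t_NN:
  assumes "\<theta> ` basisB X R \<subseteq> basisB X R" "z \<in> X"
  shows "int (t_plus X R \<theta> us z) - int (t_minus X R \<theta> us z) = NN (\<theta> ` {e \<in> basisB X R. snd e = z}) us"
proof -
  have *: "(plt R a b \<and> (\<exists>w\<in>X. plt R w z \<and> \<theta> (w, z) = (a, b))) \<longleftrightarrow> (a, b) \<in> \<theta> ` {e \<in> basisB X R. snd e = z}"
    for a b
  proof
    assume "(a, b) \<in> \<theta> ` {e \<in> basisB X R. snd e = z}"
    then obtain e where e: "e \<in> basisB X R" "snd e = z" "\<theta> e = (a, b)" by auto
    then have "(a, b) \<in> basisB X R" using assms by auto
    then show "plt R a b \<and> (\<exists>w\<in>X. plt R w z \<and> \<theta> (w, z) = (a, b))"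
      using e by (cases e) (auto simp: basisB_def)
  next
    assume "plt R a b \<and> (\<exists>w\<in>X. plt R w z \<and> \<theta> (w, z) = (a, b))"
    then obtain w where "w \<in> X" "plt R w z" "\<theta> (w, z) = (a, b)" by auto
    then show "(a, b) \<in> \<theta> ` {e \<in> basisB X R. snd e = z}"
      using assms(2) by (force simp: basisB_def)
  qed
  have "int (t_plus X R \<theta> us z) = (\<Sum>i<length us - 1. of_bool ((us!i, us!Suc i) \<in> \<theta> ` {e \<in> basisB X R. snd e = z}))"
    unfolding t_plus_def card_idx using * by simp
  moreover have "int (t_minus X R \<theta> us z) = (\<Sum>i<length us - 1. of_bool ((us!Suc i, us!i) \<in> \<theta> ` {e \<in> basisB X R. snd e = z}))"
    unfolding t_minus_def card_idx using * by simp
  ultimately show ?thesis unfolding NN_def sum_subtractf by simp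
qed

lemma admissible_iff:
  assumes "\<theta> ` basisB X R \<subseteq> basisB X R"
  shows "admissible X R \<theta> \<longleftrightarrow> (\<forall>us. is_closed_walk X R us \<longrightarrow> (\<forall>z\<in>X.
     NN (\<theta> ` {e \<in> basisB X R. fst e = z}) us = NN (\<theta> ` {e \<in> basisB X R. snd e = z}) us))"
proof -
  have eq: "(int (s_plus X R \<theta> us z) - int (s_minus X R \<theta> us z) = int (t_plus X R \<theta> us z) - int (t_minus X R \<theta> us z))
     \<longleftrightarrow> (NN (\<theta> ` {e \<in> basisB X R. fst e = z}) us = NN (\<theta> ` {e \<in> basisB X R. snd e = z}) us)"
    if "z \<in> X" for us z using s_NN[OF assms that] t_NN[OF assms that] by simp
  show ?thesis unfolding admissible_def by (simp add: eq)
qed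

section \<open>Crown: covers and flow\<close>

lemma covers_crown: "covers (crown_carrier n) (crown_le n) a b \<longleftrightarrow> plt (crown_le n) b a"
  unfolding covers_def by (auto simp: plt_crown)

lemma flow:
  assumes "is_closed_walk (crown_carrier n) (crown_le n) us" 
  shows "NN {e \<in> basisB (crown_carrier n) (crown_le n). fst e = z} us =
         NN {e \<in> basisB (crown_carrier n) (crown_le n). snd e = z} us"
proof -
  let ?B = "basisB (crown_carrier n) (crown_le n)"
  define g where "g i = (of_bool (us ! i = z) :: int)" for i
  have step: "of_bool ((us!i, us!Suc i) \<in> {e \<in> ?B. fst e = z}) - of_bool ((us!Suc i, us!i) \<in> {e \<in> ?B. fst e = z})
     - (of_bool ((us!i, us!Suc i) \<in> {e \<in> ?B. snd e = z}) - of_bool ((us!Suc i, us!i) \<in> {e \<in> ?B. snd e = z}))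
     = g i - g (Suc i)" if i: "i < length us - 1" for i
  proof -
    have i1: "i + 1 < length us" using i by simp
    from assms have "\<forall>i. i + 1 < length us \<longrightarrow> covers (crown_carrier n) (crown_le n) (us ! i) (us ! (i + 1)) \<or> covers (crown_carrier n) (crown_le n) (us ! (i + 1)) (us ! i)"
      unfolding is_closed_walk_def is_walk_def by blast
    from this[rule_format, OF i1] have "plt (crown_le n) (us!i) (us!Suc i) \<or> plt (crown_le n) (us!Suc i) (us!i)"
      unfolding covers_crown by auto
    then show ?thesis unfolding g_def basisB_def
      by (auto simp: plt_crown)
  qed
  have "NN {e \<in> ?B. fst e = z} us - NN {e \<in> ?B. snd e = z} us = (\<Sum>i<length us - 1. g i - g (Suc i))"
    unfolding NN_def sum_subtractf[symmetric] using step by (intro sum.cong) auto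
  also have "\<dots> = g 0 - g (length us - 1)" by (rule sum_lessThan_telescope')
  also have "\<dots> = 0"
  proof -
    have "us \<noteq> []" "hd us = last us" using assms unfolding is_closed_walk_def is_walk_def by auto
    then have "us ! 0 = us ! (length us - 1)" by (metis hd_conv_nth last_conv_nth)
    then show ?thesis unfolding g_def by simp
  qed
  finally show ?thesis by simp
qed


definition pd :: "nat \<Rightarrow> nat \<Rightarrow> nat" where "pd n i = (if i = 1 then n else i - 1)"

lemma sum_split2: "(\<Sum>k<2*m. f k) = (\<Sum>j<m. f (2*j) + f (Suc (2*j)) :: int)"
proof (induction m)
  case (Suc m)
  have "2 * Suc m = Suc (Suc (2*m))" by simp
  then show ?case using Suc by (simp only: sum.lessThan_Suc)
qed simp

definition cv :: "nat \<Rightarrow> nat \<Rightarrow> nat \<times> bool" where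
  "cv n k = (if k = 2*n then (1, False) else (k div 2 + 1, odd k))"
definition cw :: "nat \<Rightarrow> (nat \<times> bool) list" where
  "cw n = map (cv n) [0..<2*n+1]"

context fixes n :: nat assumes n2: "2 \<le> n" begin

abbreviation "BB \<equiv> basisB (crown_carrier n) (crown_le n)"

lemma pd_in: "i \<in> {1..n} \<Longrightarrow> pd n i \<in> {1..n}" using n2 by (auto simp: pd_def)
lemma pd_Suc: "1 \<le> i \<Longrightarrow> pd n (Suc i) = i" using n2 by (auto simp: pd_def)

lemma fst_pe: "fst (pe i) = (i, False)" by (simp add: pe_def)
lemma snd_pe: "snd (pe i) = (i, True)" by (simp add: pe_def)
lemma snd_qe: "snd (qe n i) = (i, True)" by (simp add: qe_def)

lemma qe_fst_iff: "j \<in> {1..n} \<Longrightarrow> i \<in> {1..n} \<Longrightarrow> fst (qe n j) = (i, False) \<longleftrightarrow> j = pd n i"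
  unfolding qe_def pd_def by (cases "j = n"; cases "i = 1") auto

lemma star_x: assumes i: "i \<in> {1..n}" shows "{e \<in> BB. fst e = (i, False)} = {pe i, qe n (pd n i)}"
proof (intro equalityI subsetI)
  fix e assume "e \<in> {e \<in> BB. fst e = (i, False)}"
  then have e: "e \<in> BB" "fst e = (i, False)" by auto
  show "e \<in> {pe i, qe n (pd n i)}"
  proof (rule B_cases[OF n2 e(1)])
    fix j assume "j \<in> {1..n}" "e = pe j" then show ?thesis using e by (simp add: pe_def)
  next
    fix j assume "j \<in> {1..n}" "e = qe n j" then show ?thesis using e qe_fst_iff[of j i] i by simp
  qed
next
  fix e assume "e \<in> {pe i, qe n (pd n i)}"
  then show "e \<in> {e \<in> BB. fst e = (i, False)}"
    using i pd_in[OF i] qe_fst_iff[of "pd n i" i] pe_B[OF n2 i] qe_B[OF n2 pd_in[OF i]] by (auto simp: fst_pe)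
qed

lemma B_snd: "e \<in> BB \<Longrightarrow> \<not> snd (fst e) \<and> snd (snd e)"
  using basisB_plt[of e "crown_carrier n" "crown_le n"] by (simp add: plt_crown)
lemma star_x': "{e \<in> BB. snd e = (i, False)} = {}"
proof -
  { fix e assume "e \<in> BB" "snd e = (i, False)" then have False using B_snd[of e] by simp }
  then show ?thesis by blast
qed
lemma star_y: "{e \<in> BB. fst e = (i, True)} = {}"
proof -
  { fix e assume "e \<in> BB" "fst e = (i, True)" then have False using B_snd[of e] by simp }
  then show ?thesis by blast
qed
lemma star_y': assumes i: "i \<in> {1..n}" shows "{e \<in> BB. snd e = (i, True)} = {pe i, qe n i}"
proof (intro equalityI subsetI)
  fix e assume "e \<in> {e \<in> BB. snd e = (i, True)}"
  then have e: "e \<in> BB" "snd e = (i, True)" by auto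
  show "e \<in> {pe i, qe n i}"
  proof (rule B_cases[OF n2 e(1)])
    fix j assume "j \<in> {1..n}" "e = pe j" then show ?thesis using e by (simp add: pe_def)
  next
    fix j assume "j \<in> {1..n}" "e = qe n j" then show ?thesis using e by (simp add: qe_def)
  qed
next
  fix e assume "e \<in> {pe i, qe n i}"
  then show "e \<in> {e \<in> BB. snd e = (i, True)}"
    using i pe_B[OF n2 i] qe_B[OF n2 i] by (auto simp: snd_pe snd_qe)
qed

lemma winding:
  assumes cl: "is_closed_walk (crown_carrier n) (crown_le n) us" and i: "i \<in> {1..n}"
  shows "NN {pe i} us = NN {pe 1} us \<and> NN {qe n i} us = - NN {pe 1} us"
proof -
  have y: "NN {pe i} us + NN {qe n i} us = 0" if "i \<in> {1..n}" for i
  proof -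
    have "NN {pe i, qe n i} us = 0"
      using flow[OF cl, of "(i, True)"] star_y star_y'[OF that] by simp
    then show ?thesis using NN_two[of "pe i" "qe n i" us] pe_qe[OF n2 that] by simp
  qed
  have x: "NN {pe (Suc i)} us + NN {qe n i} us = 0" if "Suc i \<in> {1..n}" "1 \<le> i" for i
  proof -
    have "NN {pe (Suc i), qe n i} us = 0"
      using flow[OF cl, of "(Suc i, False)"] star_x'[of "Suc i"] star_x[OF that(1)] pd_Suc[OF that(2)] by simp
    then show ?thesis using NN_two[of "pe (Suc i)" "qe n i" us] pe_qe[OF n2, of i] that by simp
  qed
  have p: "1 \<le> i \<longrightarrow> i \<le> n \<longrightarrow> NN {pe i} us = NN {pe 1} us" for i
  proof (induction i)
    case (Suc i)
    show ?case
    proof (cases "i = 0")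
      case False
      show ?thesis
      proof (intro impI)
        assume a: "1 \<le> Suc i" "Suc i \<le> n"
        have i1: "1 \<le> i" "i \<in> {1..n}" "Suc i \<in> {1..n}" using False a by auto
        have "NN {pe i} us = NN {pe 1} us" using Suc.IH i1 by simp
        moreover have "NN {pe (Suc i)} us + NN {qe n i} us = 0" using x[OF i1(3) i1(1)] .
        moreover have "NN {pe i} us + NN {qe n i} us = 0" using y[OF i1(2)] .
        ultimately show "NN {pe (Suc i)} us = NN {pe 1} us" by linarith
      qed
    qed simp
  qed simp
  have "NN {pe i} us = NN {pe 1} us" using p[of i] i by simp
  moreover have "NN {pe i} us + NN {qe n i} us = 0" using y[OF i] .
  ultimately show ?thesis by linarith
qed

lemma NN_single:
  assumes cl: "is_closed_walk (crown_carrier n) (crown_le n) us" and e: "e \<in> BB"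
  shows "NN {e} us = (if isP e then NN {pe 1} us else - NN {pe 1} us)"
proof (rule B_cases[OF n2 e])
  fix j assume j: "j \<in> {1..n}" "e = pe j"
  have "NN {pe j} us = NN {pe 1} us" using winding[OF cl j(1)] by blast
  then show ?thesis using j n2 by simp
next
  fix j assume j: "j \<in> {1..n}" "e = qe n j"
  have "NN {qe n j} us = - NN {pe 1} us" using winding[OF cl j(1)] by blast
  then show ?thesis using j isP_qe[OF n2 j(1)] by simp
qed
end


context fixes n :: nat assumes n2: "2 \<le> n" begin

lemma good_adm:
  assumes sub: "\<theta> ` (BB n) \<subseteq> (BB n)" and inj: "inj_on \<theta> (BB n)" and good: "\<forall>e\<in>(BB n). isP (\<theta> e) = (isP e = c)"
  shows "admissible (crown_carrier n) (crown_le n) \<theta>"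
  unfolding admissible_iff[OF sub]
proof (intro allI impI ballI)
  fix us z assume cl: "is_closed_walk (crown_carrier n) (crown_le n) us" and z: "z \<in> crown_carrier n"
  obtain i b where zi: "z = (i, b)" by (cases z)
  have i: "i \<in> {1..n}" using z zi by simp
  define w where "w = NN {pe 1} us"
  have val: "NN {\<theta> e} us = (if isP (\<theta> e) then w else - w)" if "e \<in> (BB n)" for e
  proof -
    have "\<theta> e \<in> BB n" using sub that by auto
    from NN_single[OF n2 cl this] show ?thesis unfolding w_def .
  qed
  have pair: "NN (\<theta> ` {a, b}) us = 0" if "a \<in> (BB n)" "b \<in> (BB n)" "isP a" "\<not> isP b" for a b
  proof -
    have "\<theta> a \<noteq> \<theta> b" using inj that by (metis inj_on_contraD)
    then have "NN (\<theta> ` {a, b}) us = NN {\<theta> a} us + NN {\<theta> b} us" using NN_two by simp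
    then show ?thesis using val[OF that(1)] val[OF that(2)] good that by auto
  qed
  show "NN (\<theta> ` {e \<in> (BB n). fst e = z}) us = NN (\<theta> ` {e \<in> (BB n). snd e = z}) us"
  proof (cases b)
    case True
    have "NN (\<theta> ` {pe i, qe n i}) us = 0"
      by (rule pair) (use i n2 in auto)
    moreover have z': "z = (i, True)" using zi True by simp
    ultimately show ?thesis unfolding z' star_y[OF n2] star_y'[OF n2 i] by simp
  next
    case False
    have "NN (\<theta> ` {pe i, qe n (pd n i)}) us = 0"
      by (rule pair) (use i n2 pd_in[OF n2 i] in auto)
    moreover have z': "z = (i, False)" using zi False by simp
    ultimately show ?thesis unfolding z' star_x[OF n2 i] star_x'[OF n2] by simp
  qed
qed

end


context fixes n :: nat assumes n2: "2 \<le> n" begin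

lemma cw_len: "length (cw n) = 2*n+1" by (simp add: cw_def)
lemma cw_nth: "k < 2*n+1 \<Longrightarrow> cw n ! k = cv n k"
  unfolding cw_def by (simp del: upt_Suc)

lemma cv_even: "j < n \<Longrightarrow> cv n (2*j) = (Suc j, False)" by (simp add: cv_def)
lemma cv_odd: "j < n \<Longrightarrow> cv n (Suc (2*j)) = (Suc j, True)" by (simp add: cv_def)
lemma cv_even2: "j < n \<Longrightarrow> cv n (Suc (Suc (2*j))) = (if Suc j = n then 1 else Suc (Suc j), False)"
  by (simp add: cv_def)

lemma cw_closed: "is_closed_walk (crown_carrier n) (crown_le n) (cw n)"
proof -
  have mem: "cv n k \<in> crown_carrier n" if "k \<le> 2*n" for k
    using that n2 by (auto simp: cv_def crown_carrier_def)
  have set: "set (cw n) \<subseteq> crown_carrier n"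
    using mem by (auto simp: cw_def)
  have step: "plt (crown_le n) (cv n k) (cv n (Suc k)) \<or> plt (crown_le n) (cv n (Suc k)) (cv n k)"
    if k: "k < 2*n" for k
  proof (cases "even k")
    case True
    then obtain j where j: "k = 2*j" by (auto elim: evenE)
    then have "j < n" using k by simp
    then show ?thesis using j cv_even cv_odd n2 by (simp add: plt_crown)
  next
    case False
    then obtain j where j: "k = Suc (2*j)" by (auto elim: oddE)
    then have "j < n" using k by simp
    then show ?thesis using j cv_even2 cv_odd n2 by (simp add: plt_crown)
  qed
  show ?thesis unfolding is_closed_walk_def is_walk_def
  proof (intro conjI allI impI)
    show "cw n \<noteq> []" by (simp add: cw_def)
    show "set (cw n) \<subseteq> crown_carrier n" by (rule set)
  next
    fix i assume i: "i + 1 < length (cw n)"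
    then have "i < 2*n" by (simp add: cw_len)
    from step[OF this] show "covers (crown_carrier n) (crown_le n) (cw n ! i) (cw n ! (i + 1)) \<or>
         covers (crown_carrier n) (crown_le n) (cw n ! (i + 1)) (cw n ! i)"
      using i by (auto simp: cw_len cw_nth covers_crown)
  next
    have "hd (cw n) = cv n 0" by (simp add: cw_def upt_conv_Cons del: upt_Suc)
    moreover have "last (cw n) = cv n (2*n)" by (simp add: cw_def last_map)
    ultimately show "hd (cw n) = last (cw n)" using n2 by (simp add: cv_def)
  qed
qed


lemma delta_sum: "i \<in> {1..n} \<Longrightarrow> (\<Sum>j<n. of_bool (Suc j = i) :: int) = 1"
proof -
  assume i: "i \<in> {1..n}"
  have "(\<Sum>j<n. of_bool (Suc j = i) :: int) = (\<Sum>j<n. if j = i - 1 then 1 else 0)"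
    using i by (intro sum.cong) auto
  also have "\<dots> = 1"
  proof -
    have "i - 1 < n" using i by auto
    then show ?thesis by (simp add: sum.delta)
  qed
  finally show ?thesis .
qed

lemma NN_cw:
  assumes e: "e \<in> BB n"
  shows "NN {e} (cw n) = (if isP e then 1 else -1)"
proof -
  define g where "g k = (of_bool ((cv n k, cv n (Suc k)) = e) - of_bool ((cv n (Suc k), cv n k) = e) :: int)" for k
  have "NN {e} (cw n) = (\<Sum>k<2*n. g k)"
    unfolding NN_def cw_len g_def by (intro sum.cong) (auto simp: cw_nth)
  also have "\<dots> = (\<Sum>j<n. g (2*j) + g (Suc (2*j)))" by (rule sum_split2)
  also have "\<dots> = (\<Sum>j<n. of_bool (pe (Suc j) = e) - of_bool (qe n (Suc j) = e))"
  proof (intro sum.cong refl)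
    fix j assume "j \<in> {..<n}"
    then have j: "j < n" by simp
    obtain a s b t where et: "e = ((a, s), (b, t))" by (cases e) auto
    have st: "\<not> s" "t" using B_snd[OF n2 e] et by auto
    show "g (2*j) + g (Suc (2*j)) = of_bool (pe (Suc j) = e) - of_bool (qe n (Suc j) = e)"
      unfolding g_def using cv_even[OF j] cv_odd[OF j] cv_even2[OF j] st et
      by (simp add: pe_def qe_def)
  qed
  also have "\<dots> = (if isP e then 1 else -1)"
  proof (rule B_cases[OF n2 e])
    fix i assume i: "i \<in> {1..n}" "e = pe i"
    have "(\<Sum>j<n. of_bool (pe (Suc j) = e) - of_bool (qe n (Suc j) = e)) = (\<Sum>j<n. of_bool (Suc j = i) :: int)"
      using i n2 by (intro sum.cong refl) auto
    then show ?thesis using delta_sum[OF i(1)] i n2 by simp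
  next
    fix i assume i: "i \<in> {1..n}" "e = qe n i"
    have "(\<Sum>j<n. of_bool (pe (Suc j) = e) - of_bool (qe n (Suc j) = e)) = (\<Sum>j<n. - (of_bool (Suc j = i) :: int))"
      using i n2 by (intro sum.cong refl) auto
    also have "\<dots> = - (\<Sum>j<n. of_bool (Suc j = i) :: int)" by (rule sum_negf)
    finally have "(\<Sum>j<n. of_bool (pe (Suc j) = e) - of_bool (qe n (Suc j) = e)) = - (\<Sum>j<n. of_bool (Suc j = i) :: int)" .
    then show ?thesis using delta_sum[OF i(1)] i n2 isP_qe[OF n2 i(1)] by simp
  qed
  finally show ?thesis .
qed

lemma adm_good:
  assumes sub: "\<theta> ` BB n \<subseteq> BB n" and inj: "inj_on \<theta> (BB n)"
    and adm: "admissible (crown_carrier n) (crown_le n) \<theta>"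
  shows "\<forall>e\<in>BB n. isP (\<theta> e) = (isP e = isP (\<theta> (pe 1)))"
proof -
  have A: "NN (\<theta> ` {e \<in> BB n. fst e = z}) (cw n) = NN (\<theta> ` {e \<in> BB n. snd e = z}) (cw n)"
    if "z \<in> crown_carrier n" for z
    using adm cw_closed that unfolding admissible_iff[OF sub] by blast
  have val: "NN {\<theta> e} (cw n) = (if isP (\<theta> e) then 1 else -1)" if "e \<in> BB n" for e
  proof -
    have "\<theta> e \<in> BB n" using sub that by auto
    from NN_cw[OF this] show ?thesis .
  qed
  have pair: "isP (\<theta> a) \<noteq> isP (\<theta> b)" if "a \<in> BB n" "b \<in> BB n" "a \<noteq> b" "NN (\<theta> ` {a, b}) (cw n) = 0" for a b
  proof -
    have "\<theta> a \<noteq> \<theta> b" using inj that by (metis inj_on_contraD)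
    then have "NN (\<theta> ` {a, b}) (cw n) = NN {\<theta> a} (cw n) + NN {\<theta> b} (cw n)" using NN_two by simp
    then show ?thesis using val[OF that(1)] val[OF that(2)] that(4) by (auto split: if_splits)
  qed
  have y: "isP (\<theta> (pe i)) \<noteq> isP (\<theta> (qe n i))" if i: "i \<in> {1..n}" for i
  proof (rule pair)
    show "NN (\<theta> ` {pe i, qe n i}) (cw n) = 0"
      using A[of "(i, True)"] i unfolding star_y[OF n2] star_y'[OF n2 i] by simp
  qed (use i n2 in auto)
  have x: "isP (\<theta> (pe (Suc i))) \<noteq> isP (\<theta> (qe n i))" if i: "Suc i \<in> {1..n}" "1 \<le> i" for i
  proof (rule pair)
    show "NN (\<theta> ` {pe (Suc i), qe n i}) (cw n) = 0"
      using A[of "(Suc i, False)"] i unfolding star_x[OF n2 i(1)] star_x'[OF n2] pd_Suc[OF n2 i(2)] by simp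
  qed (use i n2 in auto)
  have p: "1 \<le> i \<longrightarrow> i \<le> n \<longrightarrow> isP (\<theta> (pe i)) = isP (\<theta> (pe 1))" for i
  proof (induction i)
    case (Suc i)
    show ?case
    proof (cases "i = 0")
      case False
      show ?thesis
      proof (intro impI)
        assume a: "1 \<le> Suc i" "Suc i \<le> n"
        have i1: "1 \<le> i" "i \<in> {1..n}" "Suc i \<in> {1..n}" using False a by auto
        have "isP (\<theta> (pe i)) = isP (\<theta> (pe 1))" using Suc.IH i1 by simp
        then show "isP (\<theta> (pe (Suc i))) = isP (\<theta> (pe 1))" using x[OF i1(3) i1(1)] y[OF i1(2)] by blast
      qed
    qed simp
  qed simp
  show ?thesis
  proof
    fix e assume e: "e \<in> BB n"
    show "isP (\<theta> e) = (isP e = isP (\<theta> (pe 1)))"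
    proof (rule B_cases[OF n2 e])
      fix i assume i: "i \<in> {1..n}" "e = pe i"
      then show ?thesis using p[of i] n2 by simp
    next
      fix i assume i: "i \<in> {1..n}" "e = qe n i"
      then show ?thesis using p[of i] y[OF i(1)] isP_qe[OF n2 i(1)] by auto
    qed
  qed
qed
end


lemma crown_le_cases: "crown_le n p q \<Longrightarrow> p = q \<or> (\<not> snd p \<and> snd q)"
  unfolding crown_le_def by blast

lemma crown_le_refl: "crown_le n p p \<longleftrightarrow> p \<in> crown_carrier n"
  by (simp add: crown_le_def)

context fixes n :: nat assumes n2: "2 \<le> n" begin

lemma mcl_pair:
  assumes ab: "(a, b) \<in> BB n"
  shows "max_chain_list (crown_carrier n) (crown_le n) [a, b]"
proof -
  have p: "plt (crown_le n) a b" using ab unfolding basisB_def by simp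
  then have a: "a \<in> crown_carrier n" "\<not> snd a" and b: "b \<in> crown_carrier n" "snd b"
    by (simp_all add: plt_crown)
  have Rab: "crown_le n a b" using p by (simp add: plt_def)
  have Raa: "crown_le n a a" "crown_le n b b" using a(1) b(1) crown_le_refl by auto
  have ch: "is_chain (crown_carrier n) (crown_le n) {a, b}"
    unfolding is_chain_def using a(1) b(1) Rab Raa by blast
  have mx: "D = {a, b}" if D: "is_chain (crown_carrier n) (crown_le n) D" "{a, b} \<subseteq> D" for D
  proof (rule equalityI)
    show "D \<subseteq> {a, b}"
    proof
      fix c assume c: "c \<in> D"
      have ad: "a \<in> D" "b \<in> D" using D(2) by auto
      have all: "\<forall>x\<in>D. \<forall>y\<in>D. crown_le n x y \<or> crown_le n y x" using D(1) by (simp add: is_chain_def)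
      have h1: "crown_le n c a \<or> crown_le n a c" using all c ad(1) by blast
      have h2: "crown_le n c b \<or> crown_le n b c" using all c ad(2) by blast
      show "c \<in> {a, b}"
      proof (rule ccontr)
        assume "c \<notin> {a, b}"
        then have ne: "c \<noteq> a" "c \<noteq> b" by auto
        have "snd c"
        proof (cases "crown_le n c a")
          case True then show ?thesis using crown_le_cases[OF True] ne a(2) by simp
        next
          case False then have "crown_le n a c" using h1 by simp
          then show ?thesis using crown_le_cases[of n a c] ne by auto
        qed
        moreover have "\<not> snd c"
        proof (cases "crown_le n c b")
          case True then show ?thesis using crown_le_cases[OF True] ne by auto
        next
          case False then have "crown_le n b c" using h2 by simp
          then show ?thesis using crown_le_cases[of n b c] ne b(2) by auto
        qed
        ultimately show False by simp
      qed
    qed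
  next
    show "{a, b} \<subseteq> D" using D(2) .
  qed
  have "sorted_wrt (plt (crown_le n)) [a, b]" using p by simp
  moreover have "is_max_chain (crown_carrier n) (crown_le n) (set [a, b])"
    unfolding is_max_chain_def using ch mx by (metis set_simps empty_set)
  ultimately show ?thesis unfolding max_chain_list_def by simp
qed

lemma mcl:
  assumes m: "max_chain_list (crown_carrier n) (crown_le n) us"
  shows "\<exists>a b. us = [a, b] \<and> (a, b) \<in> BB n"
proof -
  have sw: "sorted_wrt (plt (crown_le n)) us" and ch: "is_chain (crown_carrier n) (crown_le n) (set us)"
    and mx: "\<And>D. is_chain (crown_carrier n) (crown_le n) D \<Longrightarrow> set us \<subseteq> D \<Longrightarrow> D = set us"
    using m unfolding max_chain_list_def is_max_chain_def by auto
  have sub: "set us \<subseteq> crown_carrier n" using ch by (simp add: is_chain_def)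
  consider "us = []" | a where "us = [a]" | a b where "us = [a, b]" | a b c r where "us = a # b # c # r"
    by (metis list.exhaust)
  then show ?thesis
  proof cases
    case 1
    have "is_chain (crown_carrier n) (crown_le n) {(1, False)}"
      using n2 by (auto simp: is_chain_def crown_le_refl)
    from mx[OF this] 1 show ?thesis by simp
  next
    case (2 a)
    obtain i s where a: "a = (i, s)" by (cases a)
    have ai: "1 \<le> i" "i \<le> n" using sub 2 a by auto
    have "is_chain (crown_carrier n) (crown_le n) {a, (i, \<not> s)}"
      using ai a by (auto simp: is_chain_def crown_le_def)
    from mx[OF this] 2 a show ?thesis by auto
  next
    case (3 a b)
    then have "plt (crown_le n) a b" "a \<in> crown_carrier n" "b \<in> crown_carrier n" using sw sub by auto
    then show ?thesis using 3 by (auto simp: basisB_def)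
  next
    case (4 a b c r)
    then have "plt (crown_le n) a b" "plt (crown_le n) b c" using sw by auto
    then show ?thesis by (simp add: plt_crown)
  qed
qed

lemma inc_all:
  assumes sub: "\<theta> ` BB n \<subseteq> BB n"
  shows "\<forall>us. max_chain_list (crown_carrier n) (crown_le n) us \<longrightarrow> increasing_on (crown_carrier n) (crown_le n) \<theta> us"
proof (intro allI impI)
  fix us assume "max_chain_list (crown_carrier n) (crown_le n) us"
  then obtain a b where us: "us = [a, b]" and ab: "(a, b) \<in> BB n" using mcl by blast
  have t: "\<theta> (a, b) \<in> BB n" using sub ab by auto
  obtain c d where cd: "\<theta> (a, b) = (c, d)" by (cases "\<theta> (a, b)")
  have "max_chain_list (crown_carrier n) (crown_le n) [c, d]" using mcl_pair t cd by simp
  moreover have "\<forall>i j. i < j \<and> j < length us \<longrightarrow> \<theta> (us ! i, us ! j) = ([c, d] ! i, [c, d] ! j)"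
  proof (intro allI impI)
    fix i j assume "i < j \<and> j < length us"
    then have "i = 0" "j = 1" using us by auto
    then show "\<theta> (us ! i, us ! j) = ([c, d] ! i, [c, d] ! j)" using us cd by simp
  qed
  ultimately show "increasing_on (crown_carrier n) (crown_le n) \<theta> us"
    unfolding increasing_on_def using us by (intro exI[of _ "[c, d]"]) simp
qed

end


definition phi :: "int \<Rightarrow> (nat \<Rightarrow> nat) \<times> (nat \<Rightarrow> nat) \<Rightarrow> (nat \<Rightarrow> nat) \<times> (nat \<Rightarrow> nat)" where
  "phi b x = (if b = 0 then x else (snd x, fst x))"

definition psi :: "nat \<Rightarrow> ((nat \<Rightarrow> nat) \<times> (nat \<Rightarrow> nat)) \<times> int \<Rightarrow> (nat \<times> bool) \<times> (nat \<times> bool) \<Rightarrow> (nat \<times> bool) \<times> (nat \<times> bool)" where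
  "psi n x = restrict (\<lambda>e. if isP e = (snd x = 0) then pe (fst (fst x) (ix e)) else qe n (snd (fst x) (ix e)))
     (basisB (crown_carrier n) (crown_le n))"

lemma perm_from:
  assumes "\<forall>i\<in>{1..n}. f i \<in> {1..n}" "inj_on f {1..n}"
  shows "(\<lambda>i. if i \<in> {1..n} then f i else i) permutes {1..(n::nat)}"
proof (rule bij_imp_permutes)
  let ?g = "\<lambda>i. if i \<in> {1..n} then f i else i"
  have "inj_on ?g {1..n} = inj_on f {1..n}" by (rule inj_on_cong) simp
  then have i: "inj_on ?g {1..n}" using assms(2) by simp
  have s: "?g ` {1..n} \<subseteq> {1..n}" using assms(1) by auto
  have "?g ` {1..n} = {1..n}" using endo_inj_surj[OF finite_atLeastAtMost s i] .
  then show "bij_betw ?g {1..n} {1..n}" using i by (simp add: bij_betw_def)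
next
  fix x :: nat assume "x \<notin> {1..n}"
  then show "(if x \<in> {1..n} then f x else x) = x" by (simp only: if_False)
qed

lemma inv_iso:
  assumes h: "h \<in> iso G H" and cl: "\<And>x y. x \<in> carrier G \<Longrightarrow> y \<in> carrier G \<Longrightarrow> x \<otimes>\<^bsub>G\<^esub> y \<in> carrier G"
  shows "inv_into (carrier G) h \<in> iso H G"
proof -
  have h: "h \<in> hom G H" "bij_betw h (carrier G) (carrier H)"
    using h by (auto simp add: iso_def)
  then have HG: "bij_betw (inv_into (carrier G) h) (carrier H) (carrier G)"
    by (simp add: bij_betw_inv_into)
  have "inv_into (carrier G) h \<in> hom H G"
    unfolding hom_def
  proof safe
    show *: "\<And>x. x \<in> carrier H \<Longrightarrow> inv_into (carrier G) h x \<in> carrier G"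
      by (meson HG bij_betwE)
    show "inv_into (carrier G) h (x \<otimes>\<^bsub>H\<^esub> y) = inv_into (carrier G) h x \<otimes>\<^bsub>G\<^esub> inv_into (carrier G) h y"
      if "x \<in> carrier H" "y \<in> carrier H" for x y
    proof (rule inv_into_f_eq)
      show "inj_on h (carrier G)"
        using bij_betw_def h(2) by blast
      show "inv_into (carrier G) h x \<otimes>\<^bsub>G\<^esub> inv_into (carrier G) h y \<in> carrier G"
        by (simp add: * that cl)
      show "h (inv_into (carrier G) h x \<otimes>\<^bsub>G\<^esub> inv_into (carrier G) h y) = x \<otimes>\<^bsub>H\<^esub> y"
        using h bij_betw_inv_into_right [of h] unfolding hom_def by (simp add: "*" that)
    qed
  qed
  then show ?thesis
    by (simp add: Group.iso_def bij_betw_inv_into h)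
qed

lemma carrier_Z2: "carrier (integer_mod_group 2) = {0, 1}"
  by (auto simp: carrier_integer_mod_group)

lemma aut_phi: "aut_action (sym_group n \<times>\<times> sym_group n) (integer_mod_group 2) phi"
  unfolding aut_action_def
proof (intro conjI ballI)
  fix h assume h: "h \<in> carrier (integer_mod_group 2)"
  show "phi h \<in> iso (sym_group n \<times>\<times> sym_group n) (sym_group n \<times>\<times> sym_group n)"
  proof (rule isoI)
    have in_c: "phi h x \<in> carrier (sym_group n \<times>\<times> sym_group n)" if "x \<in> carrier (sym_group n \<times>\<times> sym_group n)" for x
      using that unfolding phi_def carrier_DirProd by (cases x) simp
    have mul: "phi h (x \<otimes>\<^bsub>sym_group n \<times>\<times> sym_group n\<^esub> y) = phi h x \<otimes>\<^bsub>sym_group n \<times>\<times> sym_group n\<^esub> phi h y" for x y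
      unfolding phi_def mult_DirProd' by simp
    show "phi h \<in> hom (sym_group n \<times>\<times> sym_group n) (sym_group n \<times>\<times> sym_group n)"
      unfolding hom_def using in_c mul by blast
    have inv: "phi h (phi h x) = x" for x unfolding phi_def by simp
    show "bij_betw (phi h) (carrier (sym_group n \<times>\<times> sym_group n)) (carrier (sym_group n \<times>\<times> sym_group n))"
      by (rule bij_betwI[where g = "phi h"]) (use in_c inv in auto)
  qed
next
  fix h1 h2 x assume "h1 \<in> carrier (integer_mod_group 2)" "h2 \<in> carrier (integer_mod_group 2)"
  then have "h1 = 0 \<or> h1 = 1" "h2 = 0 \<or> h2 = 1" by (auto simp: carrier_Z2)
  then show "phi (h1 \<otimes>\<^bsub>integer_mod_group 2\<^esub> h2) x = phi h1 (phi h2 x)"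
    unfolding phi_def by (auto simp del: mult_integer_mod_group simp: integer_mod_group_def)
qed



lemma finite_BB: "finite (basisB (crown_carrier n) (crown_le n))"
  unfolding basis_crown by simp

context fixes n :: nat assumes n2: "2 \<le> n" begin

lemmas loc_simps[simp] = isP_pe[OF n2] ix_pe[OF n2] ix_qe[OF n2] pe_inj[OF n2] qe_inj[OF n2]

lemma psi_pe: "i \<in> {1..n} \<Longrightarrow> psi n ((s, t), b) (pe i) = (if b = 0 then pe (s i) else qe n (t i))"
  unfolding psi_def using pe_B[OF n2] by simp

lemma psi_qe: "i \<in> {1..n} \<Longrightarrow> psi n ((s, t), b) (qe n i) = (if b = 0 then qe n (t i) else pe (s i))"
  unfolding psi_def using qe_B[OF n2] isP_qe[OF n2] by simp

lemma psi_val: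
  assumes e: "e \<in> BB n" and st: "\<forall>i\<in>{1..n}. s i \<in> {1..n}" "\<forall>i\<in>{1..n}. t i \<in> {1..n}"
  shows "psi n ((s, t), b) e \<in> BB n" "isP (psi n ((s, t), b) e) = (isP e = (b = 0))"
    "ix (psi n ((s, t), b) e) = (if isP e = (b = 0) then s (ix e) else t (ix e))"
proof -
  have ie: "ix e \<in> {1..n}" using B_recon[OF n2 e] by simp
  have v: "psi n ((s, t), b) e = (if isP e = (b = 0) then pe (s (ix e)) else qe n (t (ix e)))"
    unfolding psi_def using e by simp
  have si: "s (ix e) \<in> {1..n}" "t (ix e) \<in> {1..n}" using st ie by auto
  show "psi n ((s, t), b) e \<in> BB n" "isP (psi n ((s, t), b) e) = (isP e = (b = 0))"
    "ix (psi n ((s, t), b) e) = (if isP e = (b = 0) then s (ix e) else t (ix e))"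
    unfolding v using si pe_B[OF n2] qe_B[OF n2] isP_qe[OF n2] by simp_all
qed

lemma psi_inj:
  assumes st: "\<forall>i\<in>{1..n}. s i \<in> {1..n}" "\<forall>i\<in>{1..n}. t i \<in> {1..n}"
    and inj: "inj_on s {1..n}" "inj_on t {1..n}"
  shows "inj_on (psi n ((s, t), b)) (BB n)"
proof (rule inj_onI)
  fix e1 e2 assume e: "e1 \<in> BB n" "e2 \<in> BB n" and eq: "psi n ((s, t), b) e1 = psi n ((s, t), b) e2"
  have P0: "(isP e1 = (b = 0)) = (isP e2 = (b = 0))" using psi_val(2)[OF e(1) st, of b] psi_val(2)[OF e(2) st, of b] eq by simp
  have P: "isP e1 = isP e2" using P0 by (cases "isP e1"; cases "isP e2"; cases "b = 0") simp_all
  have I: "(if isP e1 = (b = 0) then s (ix e1) else t (ix e1)) = (if isP e2 = (b = 0) then s (ix e2) else t (ix e2))"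
    using psi_val(3)[OF e(1) st, of b] psi_val(3)[OF e(2) st, of b] eq by simp
  have i1: "ix e1 \<in> {1..n}" "ix e2 \<in> {1..n}" using B_recon[OF n2 e(1)] B_recon[OF n2 e(2)] by simp_all
  have "ix e1 = ix e2"
  proof (cases "isP e1 = (b = 0)")
    case True
    then have "s (ix e1) = s (ix e2)" using I P by simp
    then show ?thesis using inj(1) i1 by (meson inj_onD)
  next
    case False
    then have "t (ix e1) = t (ix e2)" using I P by simp
    then show ?thesis using inj(2) i1 by (meson inj_onD)
  qed
  then show "e1 = e2" using B_recon(1)[OF n2 e(1)] B_recon(1)[OF n2 e(2)] P by metis
qed

lemma psi_carrier:
  assumes s: "s permutes {1..n}" and t: "t permutes {1..n}" and b: "b = 0 \<or> b = 1"
  shows "psi n ((s, t), b) \<in> carrier (AM_group (crown_carrier n) (crown_le n))"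
proof -
  have st: "\<forall>i\<in>{1..n}. s i \<in> {1..n}" "\<forall>i\<in>{1..n}. t i \<in> {1..n}"
    using permutes_in_image[OF s] permutes_in_image[OF t] by blast+
  have inj: "inj_on s {1..n}" "inj_on t {1..n}"
    using permutes_inj_on[OF s] permutes_inj_on[OF t] by blast+
  have sub: "psi n ((s, t), b) ` BB n \<subseteq> BB n" using psi_val(1)[OF _ st] by blast
  have ij: "inj_on (psi n ((s, t), b)) (BB n)" by (rule psi_inj[OF st inj])
  have "psi n ((s, t), b) ` BB n = BB n" using endo_inj_surj[OF finite_BB sub ij] .
  then have bij: "bij_betw (psi n ((s, t), b)) (BB n) (BB n)" using ij by (simp add: bij_betw_def)
  have good: "\<forall>e\<in>BB n. isP (psi n ((s, t), b) e) = (isP e = (b = 0))"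
    using psi_val(2)[OF _ st] by blast
  have adm: "admissible (crown_carrier n) (crown_le n) (psi n ((s, t), b))"
    by (rule good_adm[OF n2 sub ij good])
  have inM: "in_M (crown_carrier n) (crown_le n) (psi n ((s, t), b))"
    unfolding in_M_def using bij inc_all[OF n2 sub] by blast
  have ext: "psi n ((s, t), b) \<in> extensional (BB n)" unfolding psi_def by simp
  show ?thesis unfolding AM_group_def using ext inM adm by simp
qed

end


abbreviation SDG :: "nat \<Rightarrow> (((nat \<Rightarrow> nat) \<times> (nat \<Rightarrow> nat)) \<times> int) monoid" where
  "SDG n \<equiv> semidirect_prod (sym_group n \<times>\<times> sym_group n) (integer_mod_group 2) phi"

lemma carrier_SD: "x \<in> carrier (SDG n) \<longleftrightarrow>
   fst (fst x) permutes {1..n} \<and> snd (fst x) permutes {1..n} \<and> (snd x = 0 \<or> snd x = 1)"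
  unfolding semidirect_prod_def carrier_Z2 by (auto simp: sym_group_carrier mem_Times_iff)

lemma mult_SD: "mult (SDG n) ((s, t), b) ((s', t'), b') =
   ((if b = 0 then (s \<circ> s', t \<circ> t') else (s \<circ> t', t \<circ> s')), (b + b') mod 2)"
  by (simp add: semidirect_prod_def phi_def sym_group_mult)

context fixes n :: nat assumes n2: "2 \<le> n" begin

lemmas loc_simps2[simp] = isP_pe[OF n2] ix_pe[OF n2] ix_qe[OF n2] pe_inj[OF n2] qe_inj[OF n2]

lemma psi_surj:
  assumes th: "\<theta> \<in> carrier (AM_group (crown_carrier n) (crown_le n))"
  shows "\<exists>s t b. s permutes {1..n} \<and> t permutes {1..n} \<and> (b = 0 \<or> b = 1) \<and> psi n ((s, t), b) = \<theta>"
proof -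
  have ext: "\<theta> \<in> extensional (BB n)" and bij: "bij_betw \<theta> (BB n) (BB n)"
    and adm: "admissible (crown_carrier n) (crown_le n) \<theta>"
    using th unfolding AM_group_def in_M_def by auto
  have sub: "\<theta> ` BB n \<subseteq> BB n" using bij by (simp add: bij_betw_def)
  have ij: "inj_on \<theta> (BB n)" using bij by (simp add: bij_betw_def)
  define c where "c = isP (\<theta> (pe 1))"
  have good: "\<forall>e\<in>BB n. isP (\<theta> e) = (isP e = c)" using adm_good[OF n2 sub ij adm] unfolding c_def .
  define E1 where "E1 i = (if c then pe i else qe n i)" for i
  define E2 where "E2 i = (if c then qe n i else pe i)" for i
  have E1B: "E1 i \<in> BB n" "E2 i \<in> BB n" if "i \<in> {1..n}" for i
    unfolding E1_def E2_def using that pe_B[OF n2] qe_B[OF n2] by simp_all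
  have E1P: "isP (E1 i) = c" "isP (E2 i) = (\<not> c)" if "i \<in> {1..n}" for i
    unfolding E1_def E2_def using that isP_qe[OF n2] by simp_all
  have th1: "\<theta> (E1 i) = pe (ix (\<theta> (E1 i)))" "ix (\<theta> (E1 i)) \<in> {1..n}" if "i \<in> {1..n}" for i
  proof -
    have m: "\<theta> (E1 i) \<in> BB n" using sub E1B[OF that] by auto
    have "isP (\<theta> (E1 i))" using good E1B[OF that] E1P[OF that] by simp
    then show "\<theta> (E1 i) = pe (ix (\<theta> (E1 i)))" "ix (\<theta> (E1 i)) \<in> {1..n}"
      using B_recon[OF n2 m] by simp_all
  qed
  have th2: "\<theta> (E2 i) = qe n (ix (\<theta> (E2 i)))" "ix (\<theta> (E2 i)) \<in> {1..n}" if "i \<in> {1..n}" for i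
  proof -
    have m: "\<theta> (E2 i) \<in> BB n" using sub E1B[OF that] by auto
    have "\<not> isP (\<theta> (E2 i))" using good E1B[OF that] E1P[OF that] by simp
    then show "\<theta> (E2 i) = qe n (ix (\<theta> (E2 i)))" "ix (\<theta> (E2 i)) \<in> {1..n}"
      using B_recon[OF n2 m] by simp_all
  qed
  have injE: "E1 i = E1 j \<Longrightarrow> i = j" "E2 i = E2 j \<Longrightarrow> i = j" for i j
    unfolding E1_def E2_def by (cases c; simp)+
  have inj1: "inj_on (\<lambda>i. ix (\<theta> (E1 i))) {1..n}"
  proof (rule inj_onI)
    fix i j assume ij': "i \<in> {1..n}" "j \<in> {1..n}" "ix (\<theta> (E1 i)) = ix (\<theta> (E1 j))"
    then have "\<theta> (E1 i) = \<theta> (E1 j)" using th1[OF ij'(1)] th1[OF ij'(2)] by metis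
    then have "E1 i = E1 j" using ij E1B[OF ij'(1)] E1B[OF ij'(2)] by (meson inj_onD)
    then show "i = j" by (rule injE)
  qed
  have inj2: "inj_on (\<lambda>i. ix (\<theta> (E2 i))) {1..n}"
  proof (rule inj_onI)
    fix i j assume ij': "i \<in> {1..n}" "j \<in> {1..n}" "ix (\<theta> (E2 i)) = ix (\<theta> (E2 j))"
    then have "\<theta> (E2 i) = \<theta> (E2 j)" using th2[OF ij'(1)] th2[OF ij'(2)] by metis
    then have "E2 i = E2 j" using ij E1B[OF ij'(1)] E1B[OF ij'(2)] by (meson inj_onD)
    then show "i = j" by (rule injE)
  qed
  define s where "s = (\<lambda>i. if i \<in> {1..n} then ix (\<theta> (E1 i)) else i)"
  define t where "t = (\<lambda>i. if i \<in> {1..n} then ix (\<theta> (E2 i)) else i)"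
  define b :: int where "b = (if c then 0 else 1)"
  have sp: "s permutes {1..n}" unfolding s_def by (rule perm_from) (use th1 inj1 in auto)
  have tp: "t permutes {1..n}" unfolding t_def by (rule perm_from) (use th2 inj2 in auto)
  have "psi n ((s, t), b) = \<theta>"
  proof (rule extensionalityI)
    show "psi n ((s, t), b) \<in> extensional (BB n)" unfolding psi_def by simp
    show "\<theta> \<in> extensional (BB n)" by (rule ext)
  next
    fix e assume e: "e \<in> BB n"
    have ie: "ix e \<in> {1..n}" using B_recon[OF n2 e] by simp
    have v: "psi n ((s, t), b) e = (if isP e = c then pe (s (ix e)) else qe n (t (ix e)))"
      unfolding psi_def b_def using e by simp
    show "psi n ((s, t), b) e = \<theta> e"
    proof (cases "isP e = c")
      case True
      have "e = E1 (ix e)" unfolding E1_def using B_recon(1)[OF n2 e] True by (cases c) auto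
      then show ?thesis using v True th1[OF ie] ie unfolding s_def by (metis (mono_tags, lifting))
    next
      case False
      have "e = E2 (ix e)" unfolding E2_def using B_recon(1)[OF n2 e] False by (cases c) auto
      then show ?thesis using v False th2[OF ie] ie unfolding t_def by (metis (mono_tags, lifting))
    qed
  qed
  moreover have "b = 0 \<or> b = 1" unfolding b_def by simp
  ultimately show ?thesis using sp tp by blast
qed

lemma psi_inj_SD:
  assumes s: "s permutes {1..n}" "s' permutes {1..n}" and t: "t permutes {1..n}" "t' permutes {1..n}"
    and b: "b = 0 \<or> b = 1" "b' = 0 \<or> b' = 1"
    and eq: "psi n ((s, t), b) = psi n ((s', t'), b')"
  shows "((s, t), b) = ((s', t'), b')"
proof -
  have one: "(1::nat) \<in> {1..n}" using n2 by simp
  have "isP (psi n ((s, t), b) (pe 1)) = (b = 0)" "isP (psi n ((s', t'), b') (pe 1)) = (b' = 0)"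
    using psi_pe[OF n2 one] isP_qe[OF n2] permutes_in_image[OF t(1)] permutes_in_image[OF t(2)] one
    by (simp_all del: loc_simps2 add: isP_pe[OF n2])
  then have bb: "b = b'" using eq b by auto
  have si: "s i = s' i \<and> t i = t' i" for i
  proof (cases "i \<in> {1..n}")
    case True
    have "psi n ((s, t), b) (pe i) = psi n ((s', t'), b') (pe i)" "psi n ((s, t), b) (qe n i) = psi n ((s', t'), b') (qe n i)"
      using eq by simp_all
    then show ?thesis using psi_pe[OF n2 True] psi_qe[OF n2 True] bb
      by (cases "b = 0") (simp_all add: pe_qe[OF n2] qe_pe[OF n2] permutes_in_image[OF s(1)] permutes_in_image[OF t(1)])
  next
    case False
    then show ?thesis using permutes_not_in[OF s(1)] permutes_not_in[OF s(2)] permutes_not_in[OF t(1)] permutes_not_in[OF t(2)]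
      by simp
  qed
  then show ?thesis using bb by (simp add: fun_eq_iff)
qed

end


context fixes n :: nat assumes n2: "2 \<le> n" begin

lemmas loc_simps3[simp] = isP_pe[OF n2] ix_pe[OF n2] ix_qe[OF n2] pe_inj[OF n2] qe_inj[OF n2]

lemma psi_hom_eq:
  assumes s: "s permutes {1..n}" "s' permutes {1..n}" and t: "t permutes {1..n}" "t' permutes {1..n}"
    and b: "b = 0 \<or> b = 1" "b' = 0 \<or> b' = 1"
  shows "psi n (mult (SDG n) ((s, t), b) ((s', t'), b')) = restrict (psi n ((s, t), b) \<circ> psi n ((s', t'), b')) (BB n)"
proof (rule extensionalityI)
  show "psi n (mult (SDG n) ((s, t), b) ((s', t'), b')) \<in> extensional (BB n)" unfolding psi_def by simp
  show "restrict (psi n ((s, t), b) \<circ> psi n ((s', t'), b')) (BB n) \<in> extensional (BB n)" by simp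
next
  fix e assume e: "e \<in> BB n"
  have R: "restrict (psi n ((s, t), b) \<circ> psi n ((s', t'), b')) (BB n) e = psi n ((s, t), b) (psi n ((s', t'), b') e)"
    using e by simp
  note simps = psi_pe[OF n2] psi_qe[OF n2] permutes_in_image[OF s(2)] permutes_in_image[OF t(2)] mult_SD
  show "psi n (mult (SDG n) ((s, t), b) ((s', t'), b')) e = restrict (psi n ((s, t), b) \<circ> psi n ((s', t'), b')) (BB n) e"
    unfolding R
  proof (rule B_cases[OF n2 e])
    fix i assume i: "i \<in> {1..n}" "e = pe i"
    have si: "s' i \<in> {1..n}" "t' i \<in> {1..n}" using i(1) permutes_in_image[OF s(2)] permutes_in_image[OF t(2)] by auto
    note ss = psi_pe[OF n2 i(1)] psi_pe[OF n2 si(1)] psi_qe[OF n2 si(2)] mult_SD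
    show "psi n (mult (SDG n) ((s, t), b) ((s', t'), b')) e = psi n ((s, t), b) (psi n ((s', t'), b') e)"
      using b i(2) by (elim disjE) (simp_all add: ss)
  next
    fix i assume i: "i \<in> {1..n}" "e = qe n i"
    have si: "s' i \<in> {1..n}" "t' i \<in> {1..n}" using i(1) permutes_in_image[OF s(2)] permutes_in_image[OF t(2)] by auto
    note ss = psi_qe[OF n2 i(1)] psi_pe[OF n2 si(1)] psi_qe[OF n2 si(2)] mult_SD
    show "psi n (mult (SDG n) ((s, t), b) ((s', t'), b')) e = psi n ((s, t), b) (psi n ((s', t'), b') e)"
      using b i(2) by (elim disjE) (simp_all add: ss)
  qed
qed

end

theorem proposition4p10:
  fixes n :: nat
  assumes "n \<ge> 2"
  shows "\<exists>\<phi>. aut_action (sym_group n \<times>\<times> sym_group n) (integer_mod_group 2) \<phi> \<and>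
           AM_group (crown_carrier n) (crown_le n)
             \<cong> semidirect_prod (sym_group n \<times>\<times> sym_group n) (integer_mod_group 2) \<phi>"
proof -
  have n2: "2 \<le> n" using assms .
  let ?AM = "AM_group (crown_carrier n) (crown_le n)"
  have dec: "x = ((fst (fst x), snd (fst x)), snd x)" for x :: "((nat \<Rightarrow> nat) \<times> (nat \<Rightarrow> nat)) \<times> int"
    by simp
  have inC: "psi n x \<in> carrier ?AM" if "x \<in> carrier (SDG n)" for x
    using psi_carrier[OF n2, of "fst (fst x)" "snd (fst x)" "snd x"] that unfolding carrier_SD by simp
  have hom: "psi n \<in> hom (SDG n) ?AM"
    unfolding hom_def
  proof (intro CollectI conjI ballI)
    show "psi n \<in> carrier (SDG n) \<rightarrow> carrier ?AM" using inC by blast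
  next
    fix x y assume x: "x \<in> carrier (SDG n)" and y: "y \<in> carrier (SDG n)"
    have "psi n (mult (SDG n) ((fst (fst x), snd (fst x)), snd x) ((fst (fst y), snd (fst y)), snd y)) =
      restrict (psi n ((fst (fst x), snd (fst x)), snd x) \<circ> psi n ((fst (fst y), snd (fst y)), snd y)) (BB n)"
      using x y unfolding carrier_SD by (intro psi_hom_eq[OF n2]) auto
    then show "psi n (x \<otimes>\<^bsub>SDG n\<^esub> y) = psi n x \<otimes>\<^bsub>?AM\<^esub> psi n y"
      by (simp add: AM_group_def)
  qed
  have inj: "inj_on (psi n) (carrier (SDG n))"
  proof (rule inj_onI)
    fix x y assume x: "x \<in> carrier (SDG n)" and y: "y \<in> carrier (SDG n)" and eq: "psi n x = psi n y"
    have "((fst (fst x), snd (fst x)), snd x) = ((fst (fst y), snd (fst y)), snd y)"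
      using x y eq unfolding carrier_SD by (intro psi_inj_SD[OF n2]) auto
    then show "x = y" by (simp add: prod_eq_iff)
  qed
  have img: "psi n ` carrier (SDG n) = carrier ?AM"
  proof (intro equalityI subsetI)
    fix \<theta> assume "\<theta> \<in> psi n ` carrier (SDG n)" then show "\<theta> \<in> carrier ?AM" using inC by blast
  next
    fix \<theta> assume "\<theta> \<in> carrier ?AM"
    from psi_surj[OF n2 this] obtain s t b where stb: "s permutes {1..n}" "t permutes {1..n}" "b = 0 \<or> b = 1"
      "psi n ((s, t), b) = \<theta>" by blast
    have "((s, t), b) \<in> carrier (SDG n)" unfolding carrier_SD using stb by simp
    then show "\<theta> \<in> psi n ` carrier (SDG n)" using stb(4) by blast
  qed
  have iso: "psi n \<in> iso (SDG n) ?AM"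
    by (rule isoI[OF hom]) (simp add: bij_betw_def inj img)
  have cl: "x \<otimes>\<^bsub>SDG n\<^esub> y \<in> carrier (SDG n)" if "x \<in> carrier (SDG n)" "y \<in> carrier (SDG n)" for x y
  proof -
    obtain s t b where x: "x = ((s, t), b)" by (metis dec)
    obtain s' t' b' where y: "y = ((s', t'), b')" by (metis dec)
    have p: "s permutes {1..n}" "t permutes {1..n}" "b = 0 \<or> b = 1"
         "s' permutes {1..n}" "t' permutes {1..n}" "b' = 0 \<or> b' = 1"
      using that unfolding x y carrier_SD by simp_all
    have "(b + b') mod 2 = 0 \<or> (b + b') mod 2 = 1" using p(3) p(6) by auto
    then show ?thesis unfolding x y mult_SD carrier_SD using p
      by (simp add: permutes_compose)
  qed
  have "inv_into (carrier (SDG n)) (psi n) \<in> iso ?AM (SDG n)" by (rule inv_iso[OF iso cl])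
  then have "?AM \<cong> SDG n" by (rule is_isoI)
  then show ?thesis using aut_phi by blast
qed


end
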